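(* Let $n\ge1$, identify $\mathbb{R}^{n+1}=\mathbb{R}^n\times\mathbb{R}$, let $I$ be a finite nonempty index set and $f_i\colon\mathbb{R}^n\to(0,\infty)$ ($i\in I$) continuous functions with epigraphs $L_i=\{(x,y)\mid f_i(x)\le y\}$. Let $K\subset\mathbb{R}^{n+1}$ be a nonempty closed set containing a point whose last coordinate is $\le 0$, with $K\cap L_i=\emptyset$ for all $i\in I$. Let $f_{\min}(x)=\min\{f_i(x)\mid i\in I\}$, with epigraph $L=\bigcup_{i\in I}L_i$. Let $G_i^\pm$ be the upper/lower equidistant functions associated with $K$ and $L_i$, and $G_{\min}^\pm$ those associated with $K$ and $L$. Then for every $x\in\mathbb{R}^n$, $$\min\{G_i^-(x)\mid i\in I\}\le G_{\min}^-(x)\le G_{\min}^+(x)\le\min\{G_i^+(x)\mid i\in I\}.$$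
   Context: $d(p,A)=\inf\{|p-q|\mid q\in A\}$ (Euclidean distance). For a closed set $K$ and epigraph $M$ of a positive continuous function with $K\cap M=\emptyset$, the upper and lower equidistant functions are $G^+(x)=\sup\{y\mid d((x,y),K)=d((x,y),M)\}$ and $G^-(x)=\inf\{y\mid d((x,y),K)=d((x,y),M)\}$ (these are real numbers under the stated assumptions). *)

theory Defs
  imports "HOL-Analysis.Analysis"
begin

text \<open>R^(n+1) is modelled as the product (real^'n) \<times> real; the product metric
  in HOL-Analysis is the Euclidean one: dist (a,b) (c,d) = sqrt (dist a c ^ 2 + dist b d ^ 2).\<close>

definition epigraph :: "('a \<Rightarrow> real) \<Rightarrow> ('a \<times> real) set" where
  "epigraph g = {(x, y). g x \<le> y}"

definition equi_set :: "('a::metric_space \<times> real) set \<Rightarrow> ('a \<times> real) set \<Rightarrow> 'a \<Rightarrow> real set" where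
  "equi_set K M x = {y. infdist (x, y) K = infdist (x, y) M}"

definition G_plus :: "('a::metric_space \<times> real) set \<Rightarrow> ('a \<times> real) set \<Rightarrow> 'a \<Rightarrow> real" where
  "G_plus K M x = Sup (equi_set K M x)"

definition G_minus :: "('a::metric_space \<times> real) set \<Rightarrow> ('a \<times> real) set \<Rightarrow> 'a \<Rightarrow> real" where
  "G_minus K M x = Inf (equi_set K M x)"

end

theory Submission
  imports Defs
begin

lemma phi_neg:
  fixes f :: "'a::heine_borel \<Rightarrow> real"
  assumes cont: "continuous_on UNIV f" and pos: "\<And>z. f z > 0"
    and q: "q \<in> K" "snd q \<le> 0"
  shows "\<exists>Y. \<forall>y\<le>Y. infdist (x,y) K < infdist (x,y) (epigraph f)"
proof -
  obtain q1 q2 where qq: "q = (q1,q2)" by fastforce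
  define a where "a = dist x q1"
  define R where "R = a + 1"
  have R0: "R \<ge> 0" unfolding R_def a_def using zero_le_dist[of x q1] by linarith
  have "\<exists>z0\<in>cball x R. \<forall>z\<in>cball x R. f z0 \<le> f z"
    by (rule continuous_attains_inf) (use R0 in \<open>auto intro: continuous_on_subset[OF cont]\<close>)
  then obtain z0 where z0: "\<And>z. z \<in> cball x R \<Longrightarrow> f z0 \<le> f z" by blast
  define c where "c = f z0"
  have c0: "c > 0" using pos c_def by simp
  define Y where "Y = min q2 (-(a^2/(2*c)) - 1)"
  show ?thesis
  proof (intro exI allI impI)
    fix y assume yY: "y \<le> Y"
    have yq: "y \<le> q2" and y0: "y \<le> 0" using yY q qq by (auto simp: Y_def)
    have ya: "-(2*c*y) \<ge> a^2 + 2*c"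
    proof -
      have "y \<le> -(a^2/(2*c)) - 1" using yY by (simp add: Y_def)
      then have "2*c*y \<le> 2*c*(-(a^2/(2*c)) - 1)" using c0 by (intro mult_left_mono) auto
      also have "\<dots> = -(a^2) - 2*c" using c0 by (simp add: field_simps)
      finally show ?thesis by linarith
    qed
    have h1: "infdist (x,y) K \<le> sqrt (a^2 + y^2)"
    proof (rule infdist_le2[OF q(1)])
      have "(dist y q2)^2 \<le> y^2"
        using yq q qq by (simp add: dist_real_def abs_le_square_iff[symmetric])
      then show "dist (x,y) q \<le> sqrt (a^2 + y^2)"
        by (simp add: qq dist_Pair_Pair a_def)
    qed
    have h2: "sqrt (a^2 + y^2) < c - y"
    proof -
      have "a^2 + y^2 < (c - y)^2" proof -
        have cc: "c*c > 0" using c0 by simp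
        have "(c-y)^2 = c*c - 2*c*y + y^2" by (simp add: power2_eq_square algebra_simps)
        then show ?thesis using ya cc c0 by linarith
      qed
      then have "sqrt (a^2 + y^2) < sqrt ((c-y)^2)" by (rule real_sqrt_less_mono)
      then show ?thesis using c0 y0 by simp
    qed
    have h3: "sqrt (a^2 + y^2) < sqrt (R^2 + y^2)"
      by (rule real_sqrt_less_mono) (simp add: R_def a_def power_strict_mono)
    define m where "m = min (c - y) (sqrt (R^2 + y^2))"
    have "m \<le> infdist (x,y) (epigraph f)"
    proof -
      have ne: "epigraph f \<noteq> {}" by (auto simp: epigraph_def)
      show ?thesis unfolding infdist_notempty[OF ne]
      proof (rule cINF_greatest[OF ne])
        fix p assume "p \<in> epigraph f"
        then obtain x' y' where p: "p = (x',y')" "f x' \<le> y'" by (auto simp: epigraph_def)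
        show "m \<le> dist (x,y) p"
        proof (cases "dist x x' \<le> R")
          case True
          then have "c \<le> f x'" using z0 by (simp add: c_def)
          then have "c - y \<le> dist y y'" using p by (simp add: dist_real_def)
          then have "(c-y)^2 \<le> (dist x x')^2 + (dist y y')^2"
            using c0 y0 by (smt (verit) power_mono zero_le_power2)
          then have "sqrt ((c-y)^2) \<le> dist (x,y) p" unfolding p dist_Pair_Pair
            by (rule real_sqrt_le_mono)
          then show ?thesis using c0 y0 by (simp add: m_def)
        next
          case False
          have "0 < y'" using pos[of x'] p by simp
          then have "-y \<le> dist y y'" using y0 by (simp add: dist_real_def)
          then have "(-y)^2 \<le> (dist y y')^2" using y0 by (intro power_mono) auto
          then have "y^2 \<le> (dist y y')^2" by simp
          moreover have "R^2 \<le> (dist x x')^2" using False by (simp add: R_def a_def power_mono)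
          ultimately have "sqrt (R^2 + y^2) \<le> dist (x,y) p" unfolding p dist_Pair_Pair
            by (intro real_sqrt_le_mono) linarith
          then show ?thesis by (simp add: m_def)
        qed
      qed
    qed
    then show "infdist (x,y) K < infdist (x,y) (epigraph f)"
      using h1 h2 h3 unfolding m_def by linarith
  qed
qed

lemma equi_props:
  fixes f :: "'a::heine_borel \<Rightarrow> real"
  assumes cont: "continuous_on UNIV f" and pos: "\<And>z. f z > 0"
    and K: "closed K" "K \<noteq> {}" "\<exists>p\<in>K. snd p \<le> 0" and dj: "K \<inter> epigraph f = {}"
  shows "equi_set K (epigraph f) x \<noteq> {}" "bdd_above (equi_set K (epigraph f) x)"
    "bdd_below (equi_set K (epigraph f) x)"
    "\<And>y. G_plus K (epigraph f) x < y \<Longrightarrow> infdist (x,y) (epigraph f) < infdist (x,y) K"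
    "\<And>y. y < G_minus K (epigraph f) x \<Longrightarrow> infdist (x,y) K < infdist (x,y) (epigraph f)"
proof -
  define \<phi> where "\<phi> = (\<lambda>y. infdist (x,y) K - infdist (x,y) (epigraph f))"
  define E where "E = equi_set K (epigraph f) x"
  have E: "E = {y. \<phi> y = 0}" by (simp add: E_def equi_set_def \<phi>_def)
  have c\<phi>: "continuous_on S \<phi>" for S unfolding \<phi>_def by (intro continuous_intros)
  have pp: "\<phi> y > 0" if "f x \<le> y" for y
  proof -
    have "(x,y) \<in> epigraph f" using that by (simp add: epigraph_def)
    moreover then have "(x,y) \<notin> K" using dj by auto
    ultimately show ?thesis unfolding \<phi>_def using infdist_pos_not_in_closed[OF K(1,2)] by simp
  qed
  obtain q where q: "q \<in> K" "snd q \<le> 0" using K(3) by blast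
  obtain Y where Y: "\<And>y. y \<le> Y \<Longrightarrow> \<phi> y < 0"
    using phi_neg[OF cont pos q, of x] unfolding \<phi>_def by force
  have ub: "y < f x" if "y \<in> E" for y using pp[of y] that E by force
  have lb: "Y < y" if "y \<in> E" for y using Y[of y] that E by force
  have ne: "E \<noteq> {}"
  proof -
    have "\<exists>z. min Y (f x) \<le> z \<and> z \<le> f x \<and> \<phi> z = 0"
      using Y[of "min Y (f x)"] pp[of "f x"] by (intro IVT' c\<phi>) auto
    then show ?thesis using E by auto
  qed
  have ba: "bdd_above E" using ub by (meson bdd_above.I less_imp_le)
  have bb: "bdd_below E" using lb by (meson bdd_below.I less_imp_le)
  show "equi_set K (epigraph f) x \<noteq> {}" "bdd_above (equi_set K (epigraph f) x)"
    "bdd_below (equi_set K (epigraph f) x)" using ne ba bb E_def by auto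
  show "infdist (x,y) (epigraph f) < infdist (x,y) K" if "G_plus K (epigraph f) x < y" for y
  proof (rule ccontr)
    assume "\<not> ?thesis"
    then have n: "\<phi> y \<le> 0" unfolding \<phi>_def by simp
    have "y < f x" using pp[of y] n by force
    then obtain z where z: "y \<le> z" "\<phi> z = 0"
      using IVT'[of \<phi> y 0 "f x"] n pp[of "f x"] c\<phi> by force
    then have "z \<le> Sup E" using ba E by (intro cSup_upper) auto
    then show False using z that by (simp add: G_plus_def E_def)
  qed
  show "infdist (x,y) K < infdist (x,y) (epigraph f)" if "y < G_minus K (epigraph f) x" for y
  proof (rule ccontr)
    assume "\<not> ?thesis"
    then have n: "\<phi> y \<ge> 0" unfolding \<phi>_def by simp
    obtain z where z: "z \<le> y" "\<phi> z = 0"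
      using IVT'[of \<phi> "min Y y" 0 y] n Y[of "min Y y"] c\<phi> by force
    then have "Inf E \<le> z" using bb E by (intro cInf_lower) auto
    then show False using z that by (simp add: G_minus_def E_def)
  qed
qed

lemma cont_Min:
  fixes f :: "'i \<Rightarrow> 'a::topological_space \<Rightarrow> real"
  assumes "finite I" "I \<noteq> {}" "\<And>i. i \<in> I \<Longrightarrow> continuous_on UNIV (f i)"
  shows "continuous_on UNIV (\<lambda>z. Min ((\<lambda>i. f i z) ` I))"
  using assms
proof (induction I rule: finite_ne_induct)
  case (singleton x)
  then show ?case by simp
next
  case (insert x F)
  have "(\<lambda>z. Min ((\<lambda>i. f i z) ` insert x F)) = (\<lambda>z. min (f x z) (Min ((\<lambda>i. f i z) ` F)))"
    using insert by (simp add: Min_insert)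
  then show ?case using insert by (auto intro!: continuous_on_min)
qed

theorem theorem2:
  fixes I :: "'i set" and f :: "'i \<Rightarrow> (real^'n) \<Rightarrow> real"
    and K :: "((real^'n) \<times> real) set" and x :: "real^'n"
  assumes "finite I" and "I \<noteq> {}"
    and "\<And>i. i \<in> I \<Longrightarrow> continuous_on UNIV (f i)"
    and "\<And>i z. i \<in> I \<Longrightarrow> f i z > 0"
    and "closed K" and "K \<noteq> {}" and "\<exists>p\<in>K. snd p \<le> 0"
    and "\<And>i. i \<in> I \<Longrightarrow> K \<inter> epigraph (f i) = {}"
  shows "Min ((\<lambda>i. G_minus K (epigraph (f i)) x) ` I)
           \<le> G_minus K (epigraph (\<lambda>z. Min ((\<lambda>i. f i z) ` I))) x
       \<and> G_minus K (epigraph (\<lambda>z. Min ((\<lambda>i. f i z) ` I))) x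
           \<le> G_plus K (epigraph (\<lambda>z. Min ((\<lambda>i. f i z) ` I))) x
       \<and> G_plus K (epigraph (\<lambda>z. Min ((\<lambda>i. f i z) ` I))) x
           \<le> Min ((\<lambda>i. G_plus K (epigraph (f i)) x) ` I)"
proof -
  define F where "F = (\<lambda>z. Min ((\<lambda>i. f i z) ` I))"
  define L where "L = epigraph F"
  have FL: "L = (\<Union>i\<in>I. epigraph (f i))"
    using assms(1,2) by (auto simp: L_def F_def epigraph_def Min_le_iff)
  have Fc: "continuous_on UNIV F" unfolding F_def by (rule cont_Min[OF assms(1,2,3)])
  have Fpos: "F z > 0" for z unfolding F_def using assms(1,2,4) by (simp add: Min_gr_iff)
  have Fdj: "K \<inter> epigraph F = {}" using FL assms(8) L_def by auto
  note EL = equi_props[OF Fc Fpos assms(5,6,7) Fdj, where x=x]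
  have Ei4: "infdist (x,y) (epigraph (f i)) < infdist (x,y) K"
    if "i \<in> I" "G_plus K (epigraph (f i)) x < y" for i y
    by (rule equi_props(4)[OF assms(3)[OF that(1)] assms(4)[OF that(1)] assms(5,6,7) assms(8)[OF that(1)] that(2)])
  have Ei5: "infdist (x,y) K < infdist (x,y) (epigraph (f i))"
    if "i \<in> I" "y < G_minus K (epigraph (f i)) x" for i y
    by (rule equi_props(5)[OF assms(3)[OF that(1)] assms(4)[OF that(1)] assms(5,6,7) assms(8)[OF that(1)] that(2)])
  have epine: "epigraph g \<noteq> {}" for g :: "real^'n \<Rightarrow> real" by (auto simp: epigraph_def)
  have P2: "G_minus K L x \<le> G_plus K L x"
    unfolding G_minus_def G_plus_def L_def using cInf_le_cSup[OF EL(1,2,3)] .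
  have P3: "G_plus K L x \<le> G_plus K (epigraph (f i)) x" if i: "i \<in> I" for i
    unfolding G_plus_def[of K L]
  proof (rule cSup_least)
    show "equi_set K L x \<noteq> {}" using EL(1) L_def by simp
    fix y assume y: "y \<in> equi_set K L x"
    show "y \<le> G_plus K (epigraph (f i)) x"
    proof (rule ccontr)
      assume "\<not> ?thesis"
      then have a: "infdist (x,y) (epigraph (f i)) < infdist (x,y) K" using Ei4[OF i] by simp
      have "infdist (x,y) L \<le> infdist (x,y) (epigraph (f i))"
        by (rule infdist_mono) (use FL i epine in auto)
      then show False using a y by (simp add: equi_set_def)
    qed
  qed
  have P1: "Min ((\<lambda>i. G_minus K (epigraph (f i)) x) ` I) \<le> G_minus K L x"
    unfolding G_minus_def[of K L]
  proof (rule cInf_greatest)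
    show "equi_set K L x \<noteq> {}" using EL(1) L_def by simp
    fix y assume y: "y \<in> equi_set K L x"
    show "Min ((\<lambda>i. G_minus K (epigraph (f i)) x) ` I) \<le> y"
    proof (rule ccontr)
      assume "\<not> ?thesis"
      then have "\<forall>i\<in>I. y < G_minus K (epigraph (f i)) x" using assms(1,2) by (simp add: not_le Min_gr_iff)
      then have lt: "\<forall>i\<in>I. infdist (x,y) K < infdist (x,y) (epigraph (f i))" using Ei5 by blast
      define m where "m = Min ((\<lambda>i. infdist (x,y) (epigraph (f i))) ` I)"
      have m1: "infdist (x,y) K < m" unfolding m_def using lt assms(1,2) by (simp add: Min_gr_iff)
      have Lne: "L \<noteq> {}" using L_def epine by simp
      have "m \<le> infdist (x,y) L" unfolding infdist_notempty[OF Lne]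
      proof (rule cINF_greatest[OF Lne])
        fix p assume "p \<in> L"
        then obtain i where i: "i \<in> I" "p \<in> epigraph (f i)" using FL by auto
        have "m \<le> infdist (x,y) (epigraph (f i))" unfolding m_def using i assms(1) by simp
        also have "\<dots> \<le> dist (x,y) p" by (rule infdist_le[OF i(2)])
        finally show "m \<le> dist (x,y) p" .
      qed
      then show False using m1 y by (simp add: equi_set_def)
    qed
  qed
  have P3': "G_plus K L x \<le> Min ((\<lambda>i. G_plus K (epigraph (f i)) x) ` I)"
    using P3 assms(1,2) by (simp add: Min_ge_iff)
  show ?thesis using P1 P2 P3' unfolding L_def F_def by simp
qed

end
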